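(* Let $\mathcal{G}$ be a 2-player zero-sum finite game ($u_1=-u_2$) that admits a Nash equilibrium in the relative interior of $\mathcal{X}$. Then for every solution $y(t)$ of $\dot y_k=v_k(Q(y))$, $k=1,2$, the time average $\bar x(t)=t^{-1}\int_0^tx(s)\,ds$ of $x(t)=Q(y(t))$ converges to the set of Nash equilibria of $\mathcal{G}$.
   Context: Setting: finite game with players $\{1,2\}$, action sets $\mathcal{A}_k$, mixed strategies $\mathcal{X}_k=\Delta(\mathcal{A}_k)$, $\mathcal{X}=\mathcal{X}_1\times\mathcal{X}_2$, bilinear expected payoffs $u_k$, payoff vectors $v_k(x)=(u_k(\alpha;x_{-k}))_{\alpha\in\mathcal{A}_k}$. Each player has a penalty function $h_k$ on $\mathcal{X}_k$ (continuous, $C^\infty$ on relative interiors of faces, strongly convex: $h(tx_1+(1-t)x_2)\le th(x_1)+(1-t)h(x_2)-\tfrac12Kt(1-t)\|x_1-x_2\|^2$, $K>0$), with choice map $Q_k(y_k)=\arg\max_{x_k\in\mathcal{X}_k}\{\langle y_k,x_k\rangle-h_k(x_k)\}$; $Q=(Q_1,Q_2)$. *)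

theory Defs
  imports "HOL-Analysis.Analysis"
begin

definition mixed :: "(real^'a::finite) set" where
  "mixed = {x. (\<forall>i. 0 \<le> x $ i) \<and> (\<Sum>i\<in>UNIV. x $ i) = 1}"

definition strongly_convex_on :: "('a::real_normed_vector) set \<Rightarrow> real \<Rightarrow> ('a \<Rightarrow> real) \<Rightarrow> bool" where
  "strongly_convex_on S K h \<longleftrightarrow>
     (\<forall>x1\<in>S. \<forall>x2\<in>S. \<forall>t\<in>{0..1}.
        h (t *\<^sub>R x1 + (1 - t) *\<^sub>R x2)
          \<le> t * h x1 + (1 - t) * h x2 - (1/2) * K * t * (1 - t) * (norm (x1 - x2))\<^sup>2)"

text \<open>C-infinity on a set S which is relatively open in an affine subspace with
  direction set V: all iterated directional (partial) derivatives along directions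
  in V, of all orders, exist and are continuous on S.  D us is the iterated
  derivative along the list of directions us (innermost last).\<close>
definition smooth_along :: "('a::real_normed_vector) set \<Rightarrow> 'a set \<Rightarrow> ('a \<Rightarrow> real) \<Rightarrow> bool" where
  "smooth_along S V f \<longleftrightarrow>
     (\<exists>D :: 'a list \<Rightarrow> 'a \<Rightarrow> real.
        (\<forall>x\<in>S. D [] x = f x) \<and>
        (\<forall>us. set us \<subseteq> V \<longrightarrow> continuous_on S (D us)) \<and>
        (\<forall>us u x. set us \<subseteq> V \<longrightarrow> u \<in> V \<longrightarrow> x \<in> S \<longrightarrow>
           ((\<lambda>s. D us (x + s *\<^sub>R u)) has_real_derivative D (u # us) x)
             (at 0 within {s. x + s *\<^sub>R u \<in> S})))"

definition smooth_on_faces :: "('a::euclidean_space) set \<Rightarrow> ('a \<Rightarrow> real) \<Rightarrow> bool" where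
  "smooth_on_faces S h \<longleftrightarrow>
     (\<forall>F. F face_of S \<and> F \<noteq> {} \<longrightarrow>
        smooth_along (rel_interior F) {x - y | x y. x \<in> F \<and> y \<in> F} h)"

definition penalty :: "((real^'a::finite) \<Rightarrow> real) \<Rightarrow> bool" where
  "penalty h \<longleftrightarrow> continuous_on mixed h \<and> smooth_on_faces mixed h \<and>
     (\<exists>K>0. strongly_convex_on mixed K h)"

definition choice :: "((real^'a::finite) \<Rightarrow> real) \<Rightarrow> real^'a \<Rightarrow> real^'a" where
  "choice h y = (THE x. x \<in> mixed \<and> (\<forall>x'\<in>mixed. y \<bullet> x' - h x' \<le> y \<bullet> x - h x))"

definition u1 :: "('a::finite \<Rightarrow> 'b::finite \<Rightarrow> real) \<Rightarrow> (real^'a) \<times> (real^'b) \<Rightarrow> real" where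
  "u1 U x = (\<Sum>a\<in>UNIV. \<Sum>b\<in>UNIV. U a b * fst x $ a * snd x $ b)"

definition v1 :: "('a::finite \<Rightarrow> 'b::finite \<Rightarrow> real) \<Rightarrow> (real^'a) \<times> (real^'b) \<Rightarrow> real^'a" where
  "v1 U x = (\<chi> a. \<Sum>b\<in>UNIV. U a b * snd x $ b)"

definition v2 :: "('a::finite \<Rightarrow> 'b::finite \<Rightarrow> real) \<Rightarrow> (real^'a) \<times> (real^'b) \<Rightarrow> real^'b" where
  "v2 U x = (\<chi> b. \<Sum>a\<in>UNIV. U a b * fst x $ a)"

definition nash_equilibria ::
  "('a::finite \<Rightarrow> 'b::finite \<Rightarrow> real) \<Rightarrow> ('a \<Rightarrow> 'b \<Rightarrow> real) \<Rightarrow> ((real^'a) \<times> (real^'b)) set" where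
  "nash_equilibria U1 U2 =
     {x. x \<in> mixed \<times> mixed \<and>
         (\<forall>x1'\<in>mixed. u1 U1 (x1', snd x) \<le> u1 U1 x) \<and>
         (\<forall>x2'\<in>mixed. u1 U2 (fst x, x2') \<le> u1 U2 x)}"

end

theory Submission
  imports Defs
begin


lemma mixed_nonneg: "x \<in> mixed \<Longrightarrow> 0 \<le> x $ i"
  by (simp add: mixed_def)
lemma mixed_sum: "x \<in> mixed \<Longrightarrow> (\<Sum>i\<in>UNIV. x $ i) = 1"
  by (simp add: mixed_def)
lemma mixed_le1: "x \<in> mixed \<Longrightarrow> x $ i \<le> 1"
proof -
  assume x: "x \<in> mixed"
  have "x $ i \<le> (\<Sum>j\<in>UNIV. x $ j)"
    by (rule member_le_sum) (auto simp: mixed_nonneg[OF x])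
  thus ?thesis using mixed_sum[OF x] by simp
qed

lemma compact_mixed: "compact (mixed :: (real^'a::finite) set)"
unfolding compact_eq_bounded_closed proof
  show "bounded (mixed :: (real^'a) set)"
    by (rule bounded_subset[OF bounded_cbox[of 0 1]]) (auto simp: mem_box_cart mixed_nonneg mixed_le1)
  have "mixed = (\<Inter>i. {x::real^'a. 0 \<le> x $ i}) \<inter> {x. (\<Sum>i\<in>UNIV. x $ i) = 1}"
    by (auto simp: mixed_def)
  also have "closed \<dots>"
    by (intro closed_Int closed_INT ballI closed_Collect_le closed_Collect_eq continuous_intros)
  finally show "closed (mixed :: (real^'a) set)" .
qed

lemma axis_mixed: "axis i 1 \<in> mixed"
  by (simp add: mixed_def axis_def sum.delta)

lemma mixed_ne: "mixed \<noteq> {}" using axis_mixed by blast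

lemma convex_mixed: "convex mixed"
  unfolding convex_def mixed_def
  by (auto simp: sum.distrib sum_distrib_left[symmetric])


definition ismax :: "((real^'a::finite) \<Rightarrow> real) \<Rightarrow> real^'a \<Rightarrow> real^'a \<Rightarrow> bool" where
  "ismax h y x \<longleftrightarrow> x \<in> mixed \<and> (\<forall>x'\<in>mixed. y \<bullet> x' - h x' \<le> y \<bullet> x - h x)"

lemma sc_max:
  assumes sc: "strongly_convex_on mixed K h" and z: "ismax h y z" and x: "x \<in> mixed"
  shows "y \<bullet> x - h x + K/4 * (norm (x - z))\<^sup>2 \<le> y \<bullet> z - h z"
proof -
  have zm: "z \<in> mixed" using z by (simp add: ismax_def)
  define w where "w = (1/2::real) *\<^sub>R x + (1 - 1/2) *\<^sub>R z"
  have wm: "w \<in> mixed" unfolding w_def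
    using convex_mixed[unfolded convex_def] x zm by auto
  have hw: "h w \<le> 1/2 * h x + (1 - 1/2) * h z - (1/2) * K * (1/2) * (1 - 1/2) * (norm (x - z))\<^sup>2"
  proof -
    have "(1/2::real) \<in> {0..1}" by simp
    thus ?thesis using sc x zm unfolding strongly_convex_on_def w_def by blast
  qed
  have yw: "y \<bullet> w = 1/2 * (y \<bullet> x) + 1/2 * (y \<bullet> z)"
    by (simp add: w_def inner_add_right)
  have "y \<bullet> w - h w \<le> y \<bullet> z - h z" using z wm by (simp add: ismax_def)
  moreover have "h w \<le> 1/2 * h x + 1/2 * h z - K * (norm (x - z))\<^sup>2 / 8"
    using hw by simp
  ultimately show ?thesis using yw by simp
qed

lemma penalty_K: "penalty h \<Longrightarrow> \<exists>K>0. strongly_convex_on mixed K h"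
  by (simp add: penalty_def)

lemma choice_ismax:
  assumes h: "penalty h"
  shows "ismax h y (choice h y)"
proof -
  obtain K where K: "K > 0" "strongly_convex_on mixed K h" using penalty_K[OF h] by blast
  have cont: "continuous_on mixed (\<lambda>x. y \<bullet> x - h x)"
  proof -
    have hc: "continuous_on mixed h" using h by (simp add: penalty_def)
    show ?thesis by (intro continuous_on_diff continuous_on_inner continuous_on_const continuous_on_id hc)
  qed
  obtain z where z: "z \<in> mixed" "\<forall>x\<in>mixed. y \<bullet> x - h x \<le> y \<bullet> z - h z"
    using continuous_attains_sup[OF compact_mixed mixed_ne cont] by blast
  have zm: "ismax h y z" using z by (simp add: ismax_def)
  have uniq: "x = z" if "ismax h y x" for x
  proof -
    have "y \<bullet> z - h z + K/4 * (norm (z - x))\<^sup>2 \<le> y \<bullet> x - h x"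
      using sc_max[OF K(2) that z(1)] .
    moreover have "y \<bullet> x - h x \<le> y \<bullet> z - h z" using that z by (simp add: ismax_def)
    ultimately have "K/4 * (norm (z - x))\<^sup>2 \<le> 0" by simp
    with K(1) have "(norm (z - x))\<^sup>2 \<le> 0"
      by (simp add: mult_le_0_iff)
    hence "norm (z - x) = 0" by simp
    thus ?thesis by simp
  qed
  have ce: "choice h y = (THE x. ismax h y x)" by (simp add: choice_def ismax_def)
  have "(THE x. ismax h y x) = z"
    by (rule the_equality) (use zm uniq in blast)+
  hence "choice h y = z" using ce by simp
  thus ?thesis using zm by simp
qed


lemma choice_lip:
  assumes h: "penalty h"
  shows "\<exists>L\<ge>0. \<forall>y y'. norm (choice h y - choice h y') \<le> L * norm (y - y')"
proof -
  obtain K where K: "K > 0" "strongly_convex_on mixed K h" using penalty_K[OF h] by blast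
  have "norm (choice h y - choice h y') \<le> (2/K) * norm (y - y')" for y y'
  proof -
    let ?Q = "choice h y" and ?Q' = "choice h y'"
    have m: "ismax h y ?Q" "ismax h y' ?Q'" using choice_ismax[OF h] by auto
    have mm: "?Q \<in> mixed" "?Q' \<in> mixed" using m by (auto simp: ismax_def)
    define d where "d = norm (?Q - ?Q')"
    have d2: "norm (?Q' - ?Q) = d" by (simp add: d_def norm_minus_commute)
    have 1: "y \<bullet> ?Q' - h ?Q' + K/4 * d\<^sup>2 \<le> y \<bullet> ?Q - h ?Q"
      using sc_max[OF K(2) m(1) mm(2)] d2 by simp
    have 2: "y' \<bullet> ?Q - h ?Q + K/4 * d\<^sup>2 \<le> y' \<bullet> ?Q' - h ?Q'"
      using sc_max[OF K(2) m(2) mm(1)] d_def by simp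
    have "(y - y') \<bullet> (?Q - ?Q') = y \<bullet> ?Q - y \<bullet> ?Q' - y' \<bullet> ?Q + y' \<bullet> ?Q'"
      by (simp add: inner_diff_left inner_diff_right)
    with 1 2 have 3: "K/2 * d\<^sup>2 \<le> (y - y') \<bullet> (?Q - ?Q')" by simp
    also have "\<dots> \<le> norm (y - y') * d" unfolding d_def by (rule norm_cauchy_schwarz)
    finally have 4: "K/2 * d\<^sup>2 \<le> norm (y - y') * d" .
    show ?thesis
    proof (cases "d = 0")
      case True thus ?thesis using d_def K by simp
    next
      case False
      hence "d > 0" using d_def by simp
      with 4 have "K/2 * d \<le> norm (y - y')" by (simp add: power2_eq_square)
      hence "d \<le> (2/K) * norm (y - y')" using K(1) by (simp add: field_simps)
      thus ?thesis using d_def by simp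
    qed
  qed
  thus ?thesis using K(1) by (intro exI[of _ "2/K"]) auto
qed

lemma choice_cont:
  assumes h: "penalty h"
  shows "continuous_on S (choice h)"
proof -
  obtain L where L: "L \<ge> 0" "\<forall>y y'. norm (choice h y - choice h y') \<le> L * norm (y - y')"
    using choice_lip[OF h] by blast
  have "L-lipschitz_on S (choice h)"
    using L by (auto simp: lipschitz_on_def dist_norm)
  thus ?thesis by (rule lipschitz_on_continuous_on)
qed

definition hs :: "((real^'a::finite) \<Rightarrow> real) \<Rightarrow> real^'a \<Rightarrow> real" where
  "hs h y = y \<bullet> choice h y - h (choice h y)"

lemma hs_deriv:
  assumes h: "penalty h"
  shows "(hs h has_derivative (\<lambda>d. d \<bullet> choice h y)) (at y)"
proof -
  obtain L where L: "L \<ge> 0" "\<forall>y y'. norm (choice h y - choice h y') \<le> L * norm (y - y')"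
    using choice_lip[OF h] by blast
  have bnd: "norm (hs h y' - hs h y - (y' - y) \<bullet> choice h y) \<le> L * norm (y' - y) ^ 2" for y'
  proof -
    have m: "ismax h y (choice h y)" "ismax h y' (choice h y')" using choice_ismax[OF h] by auto
    have mm: "choice h y \<in> mixed" "choice h y' \<in> mixed" using m by (auto simp: ismax_def)
    have a: "y' \<bullet> choice h y - h (choice h y) \<le> hs h y'"
      using m(2) mm(1) by (auto simp: ismax_def hs_def)
    have b: "y \<bullet> choice h y' - h (choice h y') \<le> hs h y"
      using m(1) mm(2) by (auto simp: ismax_def hs_def)
    have lo: "0 \<le> hs h y' - hs h y - (y' - y) \<bullet> choice h y"
      using a by (simp add: hs_def inner_diff_left)
    have up: "hs h y' - hs h y - (y' - y) \<bullet> choice h y \<le> (y' - y) \<bullet> (choice h y' - choice h y)"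
      using b by (simp add: hs_def inner_diff_left inner_diff_right)
    also have "\<dots> \<le> norm (y' - y) * norm (choice h y' - choice h y)" by (rule norm_cauchy_schwarz)
    also have "\<dots> \<le> norm (y' - y) * (L * norm (y' - y))"
      using L(2) by (intro mult_left_mono) auto
    also have "\<dots> = L * norm (y' - y) ^ 2" by (simp add: power2_eq_square)
    finally show ?thesis using lo by simp
  qed
  show ?thesis
    unfolding has_derivative_iff_norm
  proof
    show "bounded_linear (\<lambda>d. d \<bullet> choice h y)" by (rule bounded_linear_inner_left)
    show "((\<lambda>y'. norm (hs h y' - hs h y - (y' - y) \<bullet> choice h y) / norm (y' - y)) \<longlongrightarrow> 0) (at y)"
    proof (rule Lim_null_comparison)
      show "\<forall>\<^sub>F y' in at y. norm (norm (hs h y' - hs h y - (y' - y) \<bullet> choice h y) / norm (y' - y))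
              \<le> L * norm (y' - y)"
      proof (rule always_eventually, rule allI)
        fix y'
        show "norm (norm (hs h y' - hs h y - (y' - y) \<bullet> choice h y) / norm (y' - y)) \<le> L * norm (y' - y)"
        proof (cases "y' = y")
          case True thus ?thesis by simp
        next
          case False
          hence p: "norm (y' - y) > 0" by simp
          have "norm (hs h y' - hs h y - (y' - y) \<bullet> choice h y) / norm (y' - y) \<le> L * norm (y' - y)"
            using bnd[of y'] p by (simp add: divide_le_eq power2_eq_square mult.assoc)
          thus ?thesis by simp
        qed
      qed
      have "((\<lambda>y'. L * norm (y' - y)) \<longlongrightarrow> L * norm (y - y)) (at y)"
        by (intro tendsto_intros)
      thus "((\<lambda>y'. L * norm (y' - y)) \<longlongrightarrow> 0) (at y)" by simp
    qed
  qed
qed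





lemma v1_nth: "v1 U x $ a = (\<Sum>b\<in>UNIV. U a b * snd x $ b)" by (simp add: v1_def)
lemma v2_nth: "v2 U x $ b = (\<Sum>a\<in>UNIV. U a b * fst x $ a)" by (simp add: v2_def)

lemma u1_v1: "u1 U x = fst x \<bullet> v1 U x"
  unfolding u1_def inner_vec_def v1_nth
  by (simp add: sum_distrib_left mult_ac)

lemma swap_v: "v1 U (r, q) \<bullet> p = q \<bullet> v2 U (p, r')"
proof -
  have "v1 U (r, q) \<bullet> p = (\<Sum>a\<in>UNIV. \<Sum>b\<in>UNIV. U a b * q $ b * p $ a)"
    unfolding inner_vec_def v1_nth by (simp add: sum_distrib_right)
  also have "\<dots> = (\<Sum>b\<in>UNIV. \<Sum>a\<in>UNIV. U a b * q $ b * p $ a)" by (rule sum.swap)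
  also have "\<dots> = q \<bullet> v2 U (p, r')"
    unfolding inner_vec_def v2_nth by (simp add: sum_distrib_left mult_ac)
  finally show ?thesis .
qed

lemma u1_v2: "u1 U x = snd x \<bullet> v2 U x"
  using swap_v[of U "fst x" "snd x" "fst x" "snd x"] u1_v1[of U x]
  by (cases x) (simp add: inner_commute)

lemma v1_snd: "v1 U (a, b) = v1 U (a', b)" by (simp add: v1_def)
lemma v2_fst: "v2 U (a, b) = v2 U (a, b')" by (simp add: v2_def)

lemma linear_v1: "linear (v1 U)"
  by (rule linearI) (simp_all add: vec_eq_iff v1_nth sum.distrib sum_distrib_left distrib_left mult_ac)
lemma linear_v2: "linear (v2 U)"
  by (rule linearI) (simp_all add: vec_eq_iff v2_nth sum.distrib sum_distrib_left distrib_left mult_ac)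

lemma inner_axis1: "axis i 1 \<bullet> w = (w :: real^'a::finite) $ i"
  by (simp add: inner_axis' )

lemma rel_interior_mixed_pos:
  assumes x: "x \<in> rel_interior (mixed :: (real^'a::finite) set)"
  shows "0 < x $ i"
proof (rule ccontr)
  assume "\<not> 0 < x $ i"
  moreover have xm: "x \<in> mixed" using x rel_interior_subset by blast
  ultimately have xi: "x $ i = 0" using mixed_nonneg[OF xm, of i] by simp
  obtain e where e: "e > 0" "cball x e \<inter> affine hull mixed \<subseteq> mixed"
    using x by (auto simp: mem_rel_interior_cball)
  define \<epsilon> where "\<epsilon> = e / (norm (x - axis i 1) + 1)"
  have "norm (x - axis i 1) + 1 > 0" by (simp add: add_nonneg_pos)
  hence ep: "\<epsilon> > 0" using e by (simp add: \<epsilon>_def)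
  define z where "z = (1 + \<epsilon>) *\<^sub>R x + (- \<epsilon>) *\<^sub>R axis i 1"
  have "z \<in> affine hull mixed"
    unfolding z_def
    by (rule mem_affine[OF affine_affine_hull]) (auto intro: hull_inc xm axis_mixed)
  moreover have "z \<in> cball x e"
  proof -
    have "x - z = \<epsilon> *\<^sub>R (axis i 1 - x)"
      by (simp add: z_def algebra_simps)
    hence "dist x z = \<epsilon> * norm (axis i 1 - x)" using ep by (simp add: dist_norm)
    also have "\<dots> = \<epsilon> * norm (x - axis i 1)" by (simp add: norm_minus_commute)
    also have "\<dots> \<le> e"
    proof -
      have n0: "norm (x - axis i 1) \<ge> 0" by simp
      have "e * norm (x - axis i 1) \<le> e * (norm (x - axis i 1) + 1)" using e(1) by simp
      thus ?thesis using n0 by (simp add: \<epsilon>_def divide_le_eq add_nonneg_pos)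
    qed
    finally show ?thesis by simp
  qed
  ultimately have "z \<in> mixed" using e by blast
  moreover have "z $ i = - \<epsilon>" using xi by (simp add: z_def)
  ultimately show False using mixed_nonneg[of z i] ep by simp
qed

lemma const_from_max:
  assumes p: "p \<in> mixed" and pos: "\<And>i. 0 < p $ i" and le: "\<And>a. w $ a \<le> p \<bullet> w"
  shows "w $ a = p \<bullet> w"
proof -
  have "(\<Sum>i\<in>UNIV. p $ i * (p \<bullet> w - w $ i)) = (p \<bullet> w) * (\<Sum>i\<in>UNIV. p $ i) - p \<bullet> w"
    by (simp add: right_diff_distrib sum_subtractf sum_distrib_right inner_vec_def mult_ac)
  also have "\<dots> = 0" using mixed_sum[OF p] by simp
  moreover have "\<forall>i\<in>UNIV. 0 \<le> p $ i * (p \<bullet> w - w $ i)"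
    using pos le by (metis diff_ge_0_iff_ge less_imp_le mult_nonneg_nonneg)
  ultimately have "\<forall>i\<in>UNIV. p $ i * (p \<bullet> w - w $ i) = 0"
    using sum_nonneg_eq_0_iff[of UNIV "\<lambda>i. p $ i * (p \<bullet> w - w $ i)"] by simp
  hence "p $ a * (p \<bullet> w - w $ a) = 0" by simp
  thus ?thesis using pos[of a] by simp
qed




lemma const_inner:
  assumes w: "\<And>i j. (w::real^'a::finite) $ i = w $ j" and q: "q \<in> mixed"
  shows "q \<bullet> w = w $ k"
proof -
  have "q \<bullet> w = (\<Sum>i\<in>UNIV. q $ i * w $ k)" unfolding inner_vec_def
    by (rule sum.cong[OF refl], simp only: inner_real_def, metis w)
  also have "\<dots> = w $ k" using mixed_sum[OF q] by (simp add: sum_distrib_right[symmetric])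
  finally show ?thesis .
qed

lemma avg_mixed:
  fixes f :: "real \<Rightarrow> real^'a::finite"
  assumes t: "t > 0" and fi: "f integrable_on {0..t}" and fm: "\<And>s. s \<in> {0..t} \<Longrightarrow> f s \<in> mixed"
  shows "(1/t) *\<^sub>R integral {0..t} f \<in> mixed"
proof -
  have nn: "0 \<le> ((1/t) *\<^sub>R integral {0..t} f) $ i" for i
  proof -
    have "integral {0..t} f $ i = integral {0..t} (\<lambda>s. f s $ i)"
      using integral_component_eq_cart[OF fi] by simp
    also have "\<dots> \<ge> 0"
    proof (rule integral_nonneg)
      show "(\<lambda>s. f s $ i) integrable_on {0..t}"
        using integrable_linear[OF fi bounded_linear_vec_nth[of i]] by (simp add: o_def)
      show "0 \<le> f s $ i" if "s \<in> {0..t}" for s using fm[OF that] mixed_nonneg by blast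
    qed
    finally show ?thesis using t by simp
  qed
  have bl: "bounded_linear (\<lambda>v::real^'a. \<Sum>i\<in>UNIV. v $ i)"
    by (intro bounded_linear_sum bounded_linear_vec_nth)
  have "(\<Sum>i\<in>UNIV. integral {0..t} f $ i) = integral {0..t} ((\<lambda>v::real^'a. \<Sum>i\<in>UNIV. v $ i) \<circ> f)"
    using integral_linear[OF fi bl] by simp
  also have "\<dots> = integral {0..t} (\<lambda>s. 1::real)"
    by (rule integral_cong) (simp add: mixed_sum fm)
  also have "\<dots> = t" using t by simp
  finally have "(\<Sum>i\<in>UNIV. ((1/t) *\<^sub>R integral {0..t} f) $ i) = 1"
    using t by (simp add: sum_divide_distrib[symmetric])
  with nn show ?thesis by (simp add: mixed_def)
qed

lemma uniform_small:
  fixes \<psi> \<phi> :: "'x::metric_space \<Rightarrow> real"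
  assumes K: "compact K" and psic: "continuous_on K \<psi>" and phic: "continuous_on UNIV \<phi>"
    and psin: "\<And>z. z \<in> K \<Longrightarrow> 0 \<le> \<psi> z"
    and zero: "\<And>z. z \<in> K \<Longrightarrow> \<psi> z = 0 \<Longrightarrow> \<phi> z = 0"
    and e: "\<epsilon> > 0"
  shows "\<exists>\<delta>>0. \<forall>z\<in>K. \<psi> z < \<delta> \<longrightarrow> \<phi> z < \<epsilon>"
proof -
  define S where "S = K \<inter> {z. \<epsilon> \<le> \<phi> z}"
  have cl: "closed {z. \<epsilon> \<le> \<phi> z}"
    by (rule closed_Collect_le) (auto intro: continuous_on_const phic)
  have cS: "compact S" unfolding S_def by (rule compact_Int_closed[OF K cl])
  show ?thesis
  proof (cases "S = {}")
    case True
    thus ?thesis by (intro exI[of _ 1]) (auto simp: S_def)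
  next
    case False
    obtain z0 where z0: "z0 \<in> S" "\<forall>z\<in>S. \<psi> z0 \<le> \<psi> z"
      using continuous_attains_inf[OF cS False continuous_on_subset[OF psic]] S_def by auto
    have "\<psi> z0 \<noteq> 0" using zero[of z0] z0(1) e by (auto simp: S_def)
    hence pos: "\<psi> z0 > 0" using psin[of z0] z0(1) by (auto simp: S_def)
    show ?thesis
    proof (intro exI[of _ "\<psi> z0"] conjI pos ballI impI)
      fix z assume "z \<in> K" "\<psi> z < \<psi> z0"
      thus "\<phi> z < \<epsilon>" using z0(2) by (force simp: S_def)
    qed
  qed
qed

lemma spread_bound:
  assumes hp: "penalty h" and h: "\<forall>x\<in>mixed. \<bar>h x\<bar> \<le> Hb" and p: "p \<in> mixed" and pos: "\<And>i. 0 < p $ i"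
  shows "p $ i * (y $ j - y $ i) \<le> hs h y - y \<bullet> p + Hb"
proof -
  define m where "m = (SOME m. \<forall>k. (y::real^'a::finite) $ k \<le> y $ m)"
  have "\<exists>m. \<forall>k. y $ k \<le> y $ m"
  proof -
    have "Max (range (\<lambda>k. y $ k)) \<in> range (\<lambda>k. y $ k)" by (rule Max_in) auto
    then obtain m where "Max (range (\<lambda>k. y $ k)) = y $ m" by (metis rangeE)
    moreover have "y $ k \<le> Max (range (\<lambda>k. y $ k))" for k by (rule Max_ge) auto
    ultimately show ?thesis by metis
  qed
  hence m: "\<forall>k. y $ k \<le> y $ m" unfolding m_def by (rule someI_ex)
  have "y \<bullet> axis m 1 - h (axis m 1) \<le> hs h y"
    using choice_ismax[OF hp, of y] axis_mixed[of m] by (auto simp: ismax_def hs_def)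
  hence 1: "y $ m - Hb \<le> hs h y" using h axis_mixed[of m] by (force simp: inner_axis)
  have "y $ m - y \<bullet> p = (\<Sum>k\<in>UNIV. p $ k * (y $ m - y $ k))"
    using mixed_sum[OF p]
    by (simp add: inner_vec_def right_diff_distrib sum_subtractf sum_distrib_right[symmetric] mult_ac)
  also have "\<dots> \<ge> p $ i * (y $ m - y $ i)"
    by (rule member_le_sum) (auto intro!: mult_nonneg_nonneg less_imp_le[OF pos] simp: m)
  finally have 2: "p $ i * (y $ m - y $ i) \<le> y $ m - y \<bullet> p" .
  have "p $ i * (y $ j - y $ i) \<le> p $ i * (y $ m - y $ i)"
    using pos[of i] m by (intro mult_left_mono) auto
  with 1 2 show ?thesis by linarith
qed




definition psi :: "('a::finite \<Rightarrow> 'b::finite \<Rightarrow> real) \<Rightarrow> ('a \<Rightarrow> 'b \<Rightarrow> real) \<Rightarrow> (real^'a) \<times> (real^'b) \<Rightarrow> real" where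
  "psi U1 U2 z = (\<Sum>i\<in>UNIV. \<Sum>j\<in>UNIV. \<bar>v1 U1 z $ i - v1 U1 z $ j\<bar>)
               + (\<Sum>i\<in>UNIV. \<Sum>j\<in>UNIV. \<bar>v2 U2 z $ i - v2 U2 z $ j\<bar>)"

lemma psi_nonneg: "0 \<le> psi U1 U2 z"
  unfolding psi_def by (intro add_nonneg_nonneg sum_nonneg) auto

lemma psi_cont: "continuous_on S (psi U1 U2)"
proof -
  have bl1: "bounded_linear (v1 U1)" using linear_v1 linear_conv_bounded_linear by blast
  have bl2: "bounded_linear (v2 U2)" using linear_v2 linear_conv_bounded_linear by blast
  have c1: "continuous_on S (\<lambda>z. v1 U1 z $ i)" for i
    by (rule linear_continuous_on, rule bounded_linear_compose[OF bounded_linear_vec_nth bl1])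
  have c2: "continuous_on S (\<lambda>z. v2 U2 z $ i)" for i
    by (rule linear_continuous_on, rule bounded_linear_compose[OF bounded_linear_vec_nth bl2])
  show ?thesis unfolding psi_def
    by (intro continuous_intros c1 c2)
qed

lemma dsum_zero:
  fixes f :: "'i::finite \<Rightarrow> 'j::finite \<Rightarrow> real"
  assumes "(\<Sum>i\<in>UNIV. \<Sum>j\<in>UNIV. \<bar>f i j\<bar>) = 0"
  shows "f i j = 0"
proof -
  have "\<forall>i\<in>UNIV. (\<Sum>j\<in>UNIV. \<bar>f i j\<bar>) = 0"
    using assms by (subst sum_nonneg_eq_0_iff[symmetric]) (auto intro: sum_nonneg)
  hence "(\<Sum>j\<in>UNIV. \<bar>f i j\<bar>) = 0" by simp
  hence "\<forall>j\<in>UNIV. \<bar>f i j\<bar> = 0"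
    by (subst sum_nonneg_eq_0_iff[symmetric]) auto
  thus ?thesis by simp
qed

lemma psi_zero:
  assumes z: "z \<in> mixed \<times> mixed" and p: "psi U1 U2 z = 0"
  shows "z \<in> nash_equilibria U1 U2"
proof -
  obtain z1 z2 where zz: "z = (z1, z2)" by (cases z)
  have a: "(\<Sum>i\<in>UNIV. \<Sum>j\<in>UNIV. \<bar>v1 U1 z $ i - v1 U1 z $ j\<bar>) = 0"
   and b: "(\<Sum>i\<in>UNIV. \<Sum>j\<in>UNIV. \<bar>v2 U2 z $ i - v2 U2 z $ j\<bar>) = 0"
    using p psi_nonneg unfolding psi_def
    by (smt (verit, ccfv_threshold) abs_ge_zero sum_nonneg)+
  have w1: "v1 U1 z $ i = v1 U1 z $ j" for i j using dsum_zero[OF a, of i j] by simp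
  have w2: "v2 U2 z $ i = v2 U2 z $ j" for i j using dsum_zero[OF b, of i j] by simp
  have zm: "z1 \<in> mixed" "z2 \<in> mixed" using z zz by auto
  have P1: "u1 U1 (x1', snd z) \<le> u1 U1 z" if "x1' \<in> mixed" for x1'
  proof -
    have "u1 U1 (x1', snd z) = x1' \<bullet> v1 U1 z"
      using u1_v1[of U1 "(x1', z2)"] v1_snd[of U1 x1' z2 z1] zz by simp
    also have "\<dots> = v1 U1 z $ undefined" by (rule const_inner[OF w1 that])
    also have "\<dots> = z1 \<bullet> v1 U1 z" by (rule const_inner[OF w1 zm(1), symmetric])
    also have "\<dots> = u1 U1 z" using u1_v1[of U1 z] zz by simp
    finally show ?thesis by simp
  qed
  have P2: "u1 U2 (fst z, x2') \<le> u1 U2 z" if "x2' \<in> mixed" for x2'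
  proof -
    have "u1 U2 (fst z, x2') = x2' \<bullet> v2 U2 z"
      using u1_v2[of U2 "(z1, x2')"] v2_fst[of U2 z1 x2' z2] zz by simp
    also have "\<dots> = v2 U2 z $ undefined" by (rule const_inner[OF w2 that])
    also have "\<dots> = z2 \<bullet> v2 U2 z" by (rule const_inner[OF w2 zm(2), symmetric])
    also have "\<dots> = u1 U2 z" using u1_v2[of U2 z] zz by simp
    finally show ?thesis by simp
  qed
  show ?thesis unfolding nash_equilibria_def using z P1 P2 by auto
qed




theorem proposition6p2:
  fixes U1 :: "'a::finite \<Rightarrow> 'b::finite \<Rightarrow> real" and U2 :: "'a \<Rightarrow> 'b \<Rightarrow> real"
    and h1 :: "real^'a \<Rightarrow> real" and h2 :: "real^'b \<Rightarrow> real"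
    and y :: "real \<Rightarrow> (real^'a) \<times> (real^'b)"
  assumes zero_sum: "\<And>a b. U2 a b = - U1 a b"
    and interior_NE: "\<exists>x\<in>nash_equilibria U1 U2. x \<in> rel_interior (mixed \<times> mixed)"
    and h1: "penalty h1" and h2: "penalty h2"
    and sol: "\<And>t. t \<ge> 0 \<Longrightarrow>
       (y has_vector_derivative
          (let x = (choice h1 (fst (y t)), choice h2 (snd (y t))) in (v1 U1 x, v2 U2 x)))
         (at t within {0..})"
  shows "((\<lambda>t. infdist
              ((1 / t) *\<^sub>R integral {0..t} (\<lambda>s. (choice h1 (fst (y s)), choice h2 (snd (y s)))))
              (nash_equilibria U1 U2)) \<longlongrightarrow> 0) at_top"
proof -
  define x where "x = (\<lambda>s. (choice h1 (fst (y s)), choice h2 (snd (y s))))"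
  define P where "P = (\<lambda>z. (v1 U1 z, v2 U2 z))"
  have sol': "(y has_vector_derivative P (x t)) (at t within {0..})" if "t \<ge> 0" for t
    using sol[OF that] by (simp add: x_def P_def Let_def)
  have xm: "fst (x s) \<in> mixed" "snd (x s) \<in> mixed" for s
    using choice_ismax[OF h1] choice_ismax[OF h2] by (auto simp: x_def ismax_def)
  obtain a where aN: "a \<in> nash_equilibria U1 U2" and aI: "a \<in> rel_interior (mixed \<times> mixed)"
    using interior_NE by blast
  obtain a1 a2 where aa: "a = (a1, a2)" by (cases a)
  have aI12: "a1 \<in> rel_interior mixed" "a2 \<in> rel_interior mixed"
    using aI aa rel_interior_Times[OF convex_mixed convex_mixed] by auto
  have pos1: "\<And>i. 0 < a1 $ i" and pos2: "\<And>i. 0 < a2 $ i"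
    using rel_interior_mixed_pos aI12 by blast+
  have am: "a1 \<in> mixed" "a2 \<in> mixed" using aI12 rel_interior_subset by blast+
  have zs: "u1 U2 z = - u1 U1 z" for z by (simp add: u1_def zero_sum sum_negf)
  have vz1: "v1 U2 z = - v1 U1 z" for z by (simp add: vec_eq_iff v1_nth zero_sum sum_negf)
  have vz2: "v2 U2 z = - v2 U1 z" for z by (simp add: vec_eq_iff v2_nth zero_sum sum_negf)
  have c1: "v1 U1 a $ i = a1 \<bullet> v1 U1 a" for i
  proof (rule const_from_max[OF am(1) pos1])
    fix k
    have "u1 U1 (axis k 1, a2) \<le> u1 U1 a"
      using aN aa axis_mixed[of k] by (auto simp: nash_equilibria_def)
    moreover have "u1 U1 (axis k 1, a2) = v1 U1 a $ k"
      using u1_v1[of U1 "(axis k 1, a2)"] v1_snd[of U1 "axis k 1" a2 a1] aa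
      by (simp add: inner_axis1)
    moreover have "u1 U1 a = a1 \<bullet> v1 U1 a" using u1_v1[of U1 a] aa by simp
    ultimately show "v1 U1 a $ k \<le> a1 \<bullet> v1 U1 a" by simp
  qed
  have c2: "v2 U2 a $ i = a2 \<bullet> v2 U2 a" for i
  proof (rule const_from_max[OF am(2) pos2])
    fix k
    have "u1 U2 (a1, axis k 1) \<le> u1 U2 a"
      using aN aa axis_mixed[of k] by (auto simp: nash_equilibria_def)
    moreover have "u1 U2 (a1, axis k 1) = v2 U2 a $ k"
      using u1_v2[of U2 "(a1, axis k 1)"] v2_fst[of U2 a1 "axis k 1" a2] aa
      by (simp add: inner_axis1)
    moreover have "u1 U2 a = a2 \<bullet> v2 U2 a" using u1_v2[of U2 a] aa by simp
    ultimately show "v2 U2 a $ k \<le> a2 \<bullet> v2 U2 a" by simp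
  qed
  have e1: "q \<bullet> v1 U1 a = u1 U1 a" if "q \<in> mixed" for q
  proof -
    have "q \<bullet> v1 U1 a = v1 U1 a $ undefined" by (rule const_inner[OF _ that]) (metis c1)
    also have "\<dots> = u1 U1 a" using c1 u1_v1[of U1 a] aa by simp
    finally show ?thesis .
  qed
  have e2: "q \<bullet> v2 U2 a = - u1 U1 a" if "q \<in> mixed" for q
  proof -
    have "q \<bullet> v2 U2 a = v2 U2 a $ undefined" by (rule const_inner[OF _ that]) (metis c2)
    also have "\<dots> = u1 U2 a" using c2 u1_v2[of U2 a] aa by simp
    finally show ?thesis using zs by simp
  qed
  have bracket: "v1 U1 (q1, q2) \<bullet> q1 - v1 U1 (q1, q2) \<bullet> a1
      + (v2 U2 (q1, q2) \<bullet> q2 - v2 U2 (q1, q2) \<bullet> a2) = 0"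
    if q: "q1 \<in> mixed" "q2 \<in> mixed" for q1 q2
  proof -
    have A: "v1 U1 (q1, q2) \<bullet> q1 = u1 U1 (q1, q2)" using u1_v1[of U1 "(q1,q2)"] by (simp add: inner_commute)
    have C: "v2 U2 (q1, q2) \<bullet> q2 = - u1 U1 (q1, q2)" using u1_v2[of U2 "(q1,q2)"] zs by (simp add: inner_commute)
    have B: "v1 U1 (q1, q2) \<bullet> a1 = u1 U1 a"
    proof -
      have "v1 U1 (q1, q2) \<bullet> a1 = q2 \<bullet> v2 U1 (a1, a2)" by (rule swap_v)
      also have "\<dots> = - (q2 \<bullet> v2 U2 a)" using vz2[of a] aa by simp
      finally show ?thesis using e2[OF q(2)] by simp
    qed
    have D: "v2 U2 (q1, q2) \<bullet> a2 = - u1 U1 a"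
    proof -
      have "v2 U2 (q1, q2) \<bullet> a2 = a2 \<bullet> v2 U2 (q1, a2)" using v2_fst[of U2 q1 q2 a2] by (simp add: inner_commute)
      also have "\<dots> = v1 U2 (a1, a2) \<bullet> q1" by (rule swap_v[symmetric])
      also have "\<dots> = - (q1 \<bullet> v1 U1 a)" using vz1[of a] aa by (simp add: inner_commute)
      finally show ?thesis using e1[OF q(1)] by simp
    qed
    show ?thesis using A B C D by simp
  qed
  define G where "G = (\<lambda>t. hs h1 (fst (y t)) - fst (y t) \<bullet> a1 + (hs h2 (snd (y t)) - snd (y t) \<bullet> a2))"
  have Gd: "(G has_derivative (\<lambda>h. 0)) (at t within {0..})" if t: "t \<in> {0..}" for t
  proof -
    have dy: "(y has_derivative (\<lambda>h. h *\<^sub>R P (x t))) (at t within {0..})"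
      using sol'[of t] t by (simp add: has_vector_derivative_def)
    have d1: "((\<lambda>t. hs h1 (fst (y t))) has_derivative (\<lambda>h. fst (h *\<^sub>R P (x t)) \<bullet> choice h1 (fst (y t)))) (at t within {0..})"
      by (rule has_derivative_compose[OF has_derivative_fst[OF dy] hs_deriv[OF h1]])
    have d1': "((\<lambda>t. fst (y t) \<bullet> a1) has_derivative (\<lambda>h. fst (h *\<^sub>R P (x t)) \<bullet> a1)) (at t within {0..})"
      by (rule has_derivative_compose[OF has_derivative_fst[OF dy] bounded_linear_imp_has_derivative[OF bounded_linear_inner_left]])
    have d2: "((\<lambda>t. hs h2 (snd (y t))) has_derivative (\<lambda>h. snd (h *\<^sub>R P (x t)) \<bullet> choice h2 (snd (y t)))) (at t within {0..})"
      by (rule has_derivative_compose[OF has_derivative_snd[OF dy] hs_deriv[OF h2]])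
    have d2': "((\<lambda>t. snd (y t) \<bullet> a2) has_derivative (\<lambda>h. snd (h *\<^sub>R P (x t)) \<bullet> a2)) (at t within {0..})"
      by (rule has_derivative_compose[OF has_derivative_snd[OF dy] bounded_linear_imp_has_derivative[OF bounded_linear_inner_left]])
    have all: "(G has_derivative (\<lambda>h. fst (h *\<^sub>R P (x t)) \<bullet> choice h1 (fst (y t)) - fst (h *\<^sub>R P (x t)) \<bullet> a1
        + (snd (h *\<^sub>R P (x t)) \<bullet> choice h2 (snd (y t)) - snd (h *\<^sub>R P (x t)) \<bullet> a2))) (at t within {0..})"
      unfolding G_def by (intro has_derivative_add has_derivative_diff d1 d1' d2 d2')
    show ?thesis
    proof (rule has_derivative_eq_rhs[OF all], rule ext)
      fix h :: real
      have "fst (h *\<^sub>R P (x t)) \<bullet> choice h1 (fst (y t)) - fst (h *\<^sub>R P (x t)) \<bullet> a1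
        + (snd (h *\<^sub>R P (x t)) \<bullet> choice h2 (snd (y t)) - snd (h *\<^sub>R P (x t)) \<bullet> a2)
        = h * (v1 U1 (fst (x t), snd (x t)) \<bullet> fst (x t) - v1 U1 (fst (x t), snd (x t)) \<bullet> a1
          + (v2 U2 (fst (x t), snd (x t)) \<bullet> snd (x t) - v2 U2 (fst (x t), snd (x t)) \<bullet> a2))"
        by (simp add: P_def x_def algebra_simps)
      also have "\<dots> = 0" using bracket[OF xm(1)[of t] xm(2)[of t]] by simp
      finally show "fst (h *\<^sub>R P (x t)) \<bullet> choice h1 (fst (y t)) - fst (h *\<^sub>R P (x t)) \<bullet> a1
        + (snd (h *\<^sub>R P (x t)) \<bullet> choice h2 (snd (y t)) - snd (h *\<^sub>R P (x t)) \<bullet> a2) = 0" .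
    qed
  qed
  obtain cG where cG: "\<forall>t\<in>{0..}. G t = cG"
    using has_derivative_zero_constant[OF convex_real_interval(1) Gd] by blast
  have Gc: "G t = G 0" if "t \<ge> 0" for t using cG that by simp

  obtain Hb1 where Hb1: "\<forall>z\<in>mixed. \<bar>h1 z\<bar> \<le> Hb1"
  proof -
    have "continuous_on mixed (\<lambda>z. \<bar>h1 z\<bar>)" using h1 by (intro continuous_intros) (simp add: penalty_def)
    then obtain z0 where "z0 \<in> mixed" "\<forall>z\<in>mixed. \<bar>h1 z\<bar> \<le> \<bar>h1 z0\<bar>"
      using continuous_attains_sup[OF compact_mixed mixed_ne] by blast
    thus ?thesis using that by blast
  qed
  obtain Hb2 where Hb2: "\<forall>z\<in>mixed. \<bar>h2 z\<bar> \<le> Hb2"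
  proof -
    have "continuous_on mixed (\<lambda>z. \<bar>h2 z\<bar>)" using h2 by (intro continuous_intros) (simp add: penalty_def)
    then obtain z0 where "z0 \<in> mixed" "\<forall>z\<in>mixed. \<bar>h2 z\<bar> \<le> \<bar>h2 z0\<bar>"
      using continuous_attains_sup[OF compact_mixed mixed_ne] by blast
    thus ?thesis using that by blast
  qed
  define M where "M = G 0 + Hb1 + Hb2"
  have sp1: "a1 $ i * (fst (y t) $ j - fst (y t) $ i) \<le> M" if t: "t \<ge> 0" for t i j
  proof -
    have "a2 $ undefined * (snd (y t) $ undefined - snd (y t) $ undefined) \<le> hs h2 (snd (y t)) - snd (y t) \<bullet> a2 + Hb2"
      by (rule spread_bound[OF h2 Hb2 am(2) pos2])
    moreover have "a1 $ i * (fst (y t) $ j - fst (y t) $ i) \<le> hs h1 (fst (y t)) - fst (y t) \<bullet> a1 + Hb1"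
      by (rule spread_bound[OF h1 Hb1 am(1) pos1])
    moreover have "G t = G 0" by (rule Gc[OF t])
    ultimately show ?thesis unfolding M_def G_def by (simp add: inner_commute)
  qed
  have sp2: "a2 $ i * (snd (y t) $ j - snd (y t) $ i) \<le> M" if t: "t \<ge> 0" for t i j
  proof -
    have "a1 $ undefined * (fst (y t) $ undefined - fst (y t) $ undefined) \<le> hs h1 (fst (y t)) - fst (y t) \<bullet> a1 + Hb1"
      by (rule spread_bound[OF h1 Hb1 am(1) pos1])
    moreover have "a2 $ i * (snd (y t) $ j - snd (y t) $ i) \<le> hs h2 (snd (y t)) - snd (y t) \<bullet> a2 + Hb2"
      by (rule spread_bound[OF h2 Hb2 am(2) pos2])
    moreover have "G t = G 0" by (rule Gc[OF t])
    ultimately show ?thesis unfolding M_def G_def by (simp add: inner_commute)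
  qed
  define B1 where "B1 = (\<lambda>i j. M / a1 $ i + M / a1 $ j)"
  define B2 where "B2 = (\<lambda>i j. M / a2 $ i + M / a2 $ j)"
  have sb1: "\<bar>fst (y t) $ i - fst (y t) $ j\<bar> \<le> B1 i j" if t: "t \<ge> 0" for t i j
  proof -
    have "fst (y t) $ i - fst (y t) $ j \<le> M / a1 $ j"
      using sp1[OF t, of j i] pos1[of j] by (simp add: pos_le_divide_eq mult.commute)
    moreover have "fst (y t) $ j - fst (y t) $ i \<le> M / a1 $ i"
      using sp1[OF t, of i j] pos1[of i] by (simp add: pos_le_divide_eq mult.commute)
    moreover have "0 \<le> M / a1 $ i" "0 \<le> M / a1 $ j"
      using sp1[OF t, of i i] sp1[OF t, of j j] pos1[of i] pos1[of j] by auto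
    ultimately show ?thesis unfolding B1_def by linarith
  qed
  have sb2: "\<bar>snd (y t) $ i - snd (y t) $ j\<bar> \<le> B2 i j" if t: "t \<ge> 0" for t i j
  proof -
    have "snd (y t) $ i - snd (y t) $ j \<le> M / a2 $ j"
      using sp2[OF t, of j i] pos2[of j] by (simp add: pos_le_divide_eq mult.commute)
    moreover have "snd (y t) $ j - snd (y t) $ i \<le> M / a2 $ i"
      using sp2[OF t, of i j] pos2[of i] by (simp add: pos_le_divide_eq mult.commute)
    moreover have "0 \<le> M / a2 $ i" "0 \<le> M / a2 $ j"
      using sp2[OF t, of i i] sp2[OF t, of j j] pos2[of i] pos2[of j] by auto
    ultimately show ?thesis unfolding B2_def by linarith
  qed
  have ycont: "continuous_on {0..} y"
    unfolding continuous_on_eq_continuous_within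
    using sol' has_vector_derivative_continuous by fastforce
  have xcont: "continuous_on {0..} x"
  proof -
    have "continuous_on {0..} (\<lambda>s. choice h1 (fst (y s)))"
      by (rule continuous_on_compose2[OF choice_cont[OF h1, of UNIV] continuous_on_fst[OF ycont]]) auto
    moreover have "continuous_on {0..} (\<lambda>s. choice h2 (snd (y s)))"
      by (rule continuous_on_compose2[OF choice_cont[OF h2, of UNIV] continuous_on_snd[OF ycont]]) auto
    ultimately show ?thesis unfolding x_def by (rule continuous_on_Pair)
  qed
  have bl1: "bounded_linear (v1 U1)" using linear_v1 linear_conv_bounded_linear by blast
  have bl2: "bounded_linear (v2 U2)" using linear_v2 linear_conv_bounded_linear by blast
  have blP: "bounded_linear P" unfolding P_def by (rule bounded_linear_Pair[OF bl1 bl2])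
  define xb where "xb = (\<lambda>t. (1 / t) *\<^sub>R integral {0..t} x)"
  have xb_facts: "xb t \<in> mixed \<times> mixed \<and> P (xb t) = (1/t) *\<^sub>R (y t - y 0)" if t: "t > 0" for t
  proof -
    have xint: "x integrable_on {0..t}"
      by (rule integrable_continuous_real, rule continuous_on_subset[OF xcont]) auto
    have "((\<lambda>s. P (x s)) has_integral (y t - y 0)) {0..t}"
      by (rule fundamental_theorem_of_calculus)
         (use t in \<open>auto intro: has_vector_derivative_within_subset[OF sol']\<close>)
    hence "integral {0..t} (P \<circ> x) = y t - y 0" by (simp add: o_def integral_unique)
    hence "P (integral {0..t} x) = y t - y 0" using integral_linear[OF xint blP] by simp
    hence Pxb: "P (xb t) = (1/t) *\<^sub>R (y t - y 0)"
      unfolding xb_def using linear_cmul[OF bounded_linear.linear[OF blP]] by simp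
    have f1: "fst (xb t) = (1/t) *\<^sub>R integral {0..t} (\<lambda>s. fst (x s))"
      unfolding xb_def using integral_linear[OF xint bounded_linear_fst] by (simp add: o_def)
    have f2: "snd (xb t) = (1/t) *\<^sub>R integral {0..t} (\<lambda>s. snd (x s))"
      unfolding xb_def using integral_linear[OF xint bounded_linear_snd] by (simp add: o_def)
    have "fst (xb t) \<in> mixed" unfolding f1
      by (rule avg_mixed[OF t]) (use integrable_linear[OF xint bounded_linear_fst] xm in \<open>auto simp: o_def\<close>)
    moreover have "snd (xb t) \<in> mixed" unfolding f2
      by (rule avg_mixed[OF t]) (use integrable_linear[OF xint bounded_linear_snd] xm in \<open>auto simp: o_def\<close>)
    ultimately show ?thesis using Pxb by (simp add: mem_Times_iff)
  qed
  define C where "C = (\<Sum>i\<in>UNIV. \<Sum>j\<in>UNIV. 2 * B1 i j) + (\<Sum>i\<in>UNIV. \<Sum>j\<in>UNIV. 2 * B2 i j)"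
  have psib: "psi U1 U2 (xb t) \<le> C / t" if t: "t > 0" for t
  proof -
    have "fst (P (xb t)) = fst ((1/t) *\<^sub>R (y t - y 0))" using xb_facts[OF t] by simp
    hence P1: "v1 U1 (xb t) = (1/t) *\<^sub>R (fst (y t) - fst (y 0))" by (simp add: P_def)
    have "snd (P (xb t)) = snd ((1/t) *\<^sub>R (y t - y 0))" using xb_facts[OF t] by simp
    hence P2: "v2 U2 (xb t) = (1/t) *\<^sub>R (snd (y t) - snd (y 0))" by (simp add: P_def)
    have k1: "\<bar>v1 U1 (xb t) $ i - v1 U1 (xb t) $ j\<bar> \<le> 2 * B1 i j / t" for i j
    proof -
      have "v1 U1 (xb t) $ i - v1 U1 (xb t) $ j
          = ((fst (y t) $ i - fst (y t) $ j) - (fst (y 0) $ i - fst (y 0) $ j)) / t"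
        unfolding P1 by (simp add: diff_divide_distrib)
      also have "\<bar>\<dots>\<bar> \<le> 2 * B1 i j / t"
        using sb1[of t i j] sb1[of 0 i j] t by (simp add: abs_div divide_right_mono)
      finally show ?thesis .
    qed
    have k2: "\<bar>v2 U2 (xb t) $ i - v2 U2 (xb t) $ j\<bar> \<le> 2 * B2 i j / t" for i j
    proof -
      have "v2 U2 (xb t) $ i - v2 U2 (xb t) $ j
          = ((snd (y t) $ i - snd (y t) $ j) - (snd (y 0) $ i - snd (y 0) $ j)) / t"
        unfolding P2 by (simp add: diff_divide_distrib)
      also have "\<bar>\<dots>\<bar> \<le> 2 * B2 i j / t"
        using sb2[of t i j] sb2[of 0 i j] t by (simp add: abs_div divide_right_mono)
      finally show ?thesis .
    qed
    have "psi U1 U2 (xb t) \<le> (\<Sum>i\<in>UNIV. \<Sum>j\<in>UNIV. 2 * B1 i j / t) + (\<Sum>i\<in>UNIV. \<Sum>j\<in>UNIV. 2 * B2 i j / t)"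
      unfolding psi_def by (intro add_mono sum_mono k1 k2)
    also have "\<dots> = C / t" unfolding C_def by (simp add: sum_divide_distrib add_divide_distrib)
    finally show ?thesis .
  qed
  show ?thesis
  proof (rule tendstoI)
    fix \<epsilon> :: real assume e: "\<epsilon> > 0"
    obtain \<delta> where d: "\<delta> > 0" and dd: "\<forall>z\<in>mixed \<times> mixed. psi U1 U2 z < \<delta> \<longrightarrow> infdist z (nash_equilibria U1 U2) < \<epsilon>"
      using uniform_small[OF compact_Times[OF compact_mixed compact_mixed] psi_cont
              continuous_on_infdist[OF continuous_on_id] psi_nonneg _ e, of U1 U2 "nash_equilibria U1 U2"]
            psi_zero infdist_zero by blast
    show "\<forall>\<^sub>F t in at_top. dist (infdist ((1 / t) *\<^sub>R integral {0..t} (\<lambda>s. (choice h1 (fst (y s)), choice h2 (snd (y s)))))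
              (nash_equilibria U1 U2)) 0 < \<epsilon>"
      unfolding eventually_at_top_linorder
    proof (intro exI[of _ "\<bar>C\<bar> / \<delta> + 1"] allI impI)
      fix t assume tN: "\<bar>C\<bar> / \<delta> + 1 \<le> t"
      have t0: "t > 0" using tN d by (smt (verit) divide_nonneg_pos abs_ge_zero)
      have "\<bar>C\<bar> < \<delta> * t" using tN d by (simp add: field_simps)
      hence "C / t < \<delta>" using t0 by (simp add: divide_less_eq mult.commute)
      hence "psi U1 U2 (xb t) < \<delta>" using psib[OF t0] by simp
      moreover have xbm: "xb t \<in> mixed \<times> mixed" using xb_facts[OF t0] by (rule conjunct1)
      ultimately have "infdist (xb t) (nash_equilibria U1 U2) < \<epsilon>" using dd[rule_format, OF xbm] by simp
      thus "dist (infdist ((1 / t) *\<^sub>R integral {0..t} (\<lambda>s. (choice h1 (fst (y s)), choice h2 (snd (y s)))))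
              (nash_equilibria U1 U2)) 0 < \<epsilon>"
        by (simp add: xb_def x_def infdist_nonneg)
    qed
  qed
qed


end
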